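(* Let $m,n$ be positive integers, let $\theta=\frac{\max\{n+1,m+2\}}{m}$, and let $\Phi:\mathbb{N}\to(0,\infty)$ satisfy $\Phi(t)\le t^{-n/m}$ for $t\ge1$ and $\tau:=\liminf_{t\to\infty}\frac{-\log\Phi(t)}{\log t}>\theta$. Let $\mathbf{a}\in\mathbb{R}^{m}$ (a column vector) belong to $Exact^{m,1}(\Phi)$. Then for Lebesgue-almost every matrix $U\in\mathbb{R}^{m\times(n-1)}$ (with respect to $(n-1)m$-dimensional Lebesgue measure), the matrix $A=(\mathbf{a},U)\in\mathbb{R}^{m\times n}$, whose first column is $\mathbf{a}$ followed by the columns of $U$, belongs to $Exact^{m,n}(\Phi)$.
   Context: All norms are maximum norms. For positive integers $m,n$ and $\Psi:\mathbb{N}\to(0,\infty)$, $W^{m,n}(\Psi)$ is the set of real $m\times n$ matrices $A$ such that $\Vert A\mathbf{q}-\mathbf{p}\Vert\le\Psi(\Vert\mathbf{q}\Vert)$ for infinitely many $\mathbf{p}\in\mathbb{Z}^m$, $\mathbf{q}\in\mathbb{Z}^n\setminus\{0\}$, and $Exact^{m,n}(\Phi)=W^{m,n}(\Phi)\setminus\bigcup_{c>1}W^{m,n}(\Phi/c)$, where $\Phi/c$ is $t\mapsto\Phi(t)/c$. $Exact^{m,1}(\Phi)\subseteq\mathbb{R}^m$ is the case $n=1$ (vectors viewed as $m\times1$ matrices). *)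

theory Defs
  imports "HOL-Analysis.Analysis" "HOL-Probability.Probability"
begin

definition intvecs :: "nat \<Rightarrow> (nat \<Rightarrow> int) set" where
  "intvecs k = {q. \<forall>i\<ge>k. q i = 0}"

definition inorm :: "nat \<Rightarrow> (nat \<Rightarrow> int) \<Rightarrow> nat" where
  "inorm k q = Max ({0} \<union> {nat \<bar>q i\<bar> | i. i < k})"

definition resnorm :: "nat \<Rightarrow> nat \<Rightarrow> (nat \<Rightarrow> nat \<Rightarrow> real) \<Rightarrow> (nat \<Rightarrow> int) \<Rightarrow> (nat \<Rightarrow> int) \<Rightarrow> real" where
  "resnorm m n A p q = Max ({0} \<union> {\<bar>(\<Sum>j<n. A i j * of_int (q j)) - of_int (p i)\<bar> | i. i < m})"

definition W :: "nat \<Rightarrow> nat \<Rightarrow> (nat \<Rightarrow> real) \<Rightarrow> (nat \<Rightarrow> nat \<Rightarrow> real) set" where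
  "W m n \<Psi> = {A. infinite {(p, q). p \<in> intvecs m \<and> q \<in> intvecs n \<and> q \<noteq> (\<lambda>_. 0) \<and>
                  resnorm m n A p q \<le> \<Psi> (inorm n q)}}"

definition Exact :: "nat \<Rightarrow> nat \<Rightarrow> (nat \<Rightarrow> real) \<Rightarrow> (nat \<Rightarrow> nat \<Rightarrow> real) set" where
  "Exact m n \<Phi> = W m n \<Phi> - (\<Union>c\<in>{c::real. c > 1}. W m n (\<lambda>t. \<Phi> t / c))"

end

theory Submission
  imports Defs
begin

definition dz :: "real \<Rightarrow> real" where "dz x = \<bar>x - of_int (round x)\<bar>"

lemma dz_le: "dz x \<le> \<bar>x - of_int p\<bar>"
  unfolding dz_def by (rule round_diff_minimal)

lemma borel_dz[measurable]: "dz \<in> borel_measurable borel"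
proof -
  have "dz = (\<lambda>x. \<bar>x - real_of_int \<lfloor>x + 1/2\<rfloor>\<bar>)" by (auto simp: dz_def round_def fun_eq_iff)
  moreover have "(\<lambda>x::real. \<bar>x - real_of_int \<lfloor>x + 1/2\<rfloor>\<bar>) \<in> borel_measurable borel"
    using borel_measurable_real_floor by measurable
  ultimately show ?thesis by simp
qed

lemma finite_int_near: "finite {p::int. \<bar>real_of_int p - c\<bar> \<le> r}"
proof -
  have "{p::int. \<bar>real_of_int p - c\<bar> \<le> r} \<subseteq> {\<lceil>c - r\<rceil>..\<lfloor>c + r\<rfloor>}"
    by (auto simp: ceiling_le_iff le_floor_iff abs_le_iff)
  then show ?thesis by (rule finite_subset) simp
qed

lemma card_int_near: assumes "r \<ge> 0" shows "real (card {p::int. \<bar>real_of_int p - c\<bar> \<le> r}) \<le> 2*r + 1"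
proof -
  have "{p::int. \<bar>real_of_int p - c\<bar> \<le> r} \<subseteq> {\<lceil>c - r\<rceil>..\<lfloor>c + r\<rfloor>}"
    by (auto simp: ceiling_le_iff le_floor_iff abs_le_iff)
  then have "card {p::int. \<bar>real_of_int p - c\<bar> \<le> r} \<le> card {\<lceil>c - r\<rceil>..\<lfloor>c + r\<rfloor>}"
    by (rule card_mono[rotated]) simp
  also have "\<dots> = nat (\<lfloor>c + r\<rfloor> + 1 - \<lceil>c - r\<rceil>)" by simp
  finally have "real (card {p::int. \<bar>real_of_int p - c\<bar> \<le> r}) \<le> real (nat (\<lfloor>c + r\<rfloor> + 1 - \<lceil>c - r\<rceil>))"
    by linarith
  also have "\<dots> \<le> 2*r+1"
  proof -
    have "real_of_int \<lfloor>c + r\<rfloor> \<le> c + r" by simp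
    moreover have "c - r \<le> real_of_int \<lceil>c - r\<rceil>" by simp
    moreover have "real (nat (\<lfloor>c + r\<rfloor> + 1 - \<lceil>c - r\<rceil>)) = max 0 (real_of_int \<lfloor>c + r\<rfloor> + 1 - real_of_int \<lceil>c - r\<rceil>)"
      by (cases "\<lfloor>c + r\<rfloor> + 1 - \<lceil>c - r\<rceil> \<ge> 0") auto
    ultimately show ?thesis using assms by linarith
  qed
  finally show ?thesis .
qed

lemma inj_restrict_intvecs: "inj_on (\<lambda>p. restrict p {..<m}) (intvecs m)"
  unfolding inj_on_def
proof (intro ballI impI ext)
  fix p p' i assume h: "p \<in> intvecs m" "p' \<in> intvecs m"
    "restrict p {..<m} = restrict p' {..<m}"
  show "p i = p' i"
  proof (cases "i < m")
    case True then show ?thesis using fun_cong[OF h(3), of i] by simp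
  next
    case False then show ?thesis using h(1,2) by (auto simp: intvecs_def)
  qed
qed

lemma finite_intvecs_bounded:
  "finite {p \<in> intvecs m. \<forall>i<m. \<bar>real_of_int (p i) - x i\<bar> \<le> r}"
proof -
  let ?S = "{p \<in> intvecs m. \<forall>i<m. \<bar>real_of_int (p i) - x i\<bar> \<le> r}"
  have "inj_on (\<lambda>p. restrict p {..<m}) ?S"
    by (rule inj_on_subset[OF inj_restrict_intvecs]) auto
  moreover have "(\<lambda>p. restrict p {..<m}) ` ?S \<subseteq> PiE {..<m} (\<lambda>i. {p::int. \<bar>real_of_int p - x i\<bar> \<le> r})"
    unfolding image_subset_iff restrict_PiE_iff by simp
  moreover have "finite (PiE {..<m} (\<lambda>i. {p::int. \<bar>real_of_int p - x i\<bar> \<le> r}))"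
    by (intro finite_PiE finite_int_near) auto
  ultimately show ?thesis by (meson finite_imageD finite_subset)
qed

lemma card_intvecs_norm:
  "real (card {q \<in> intvecs n. inorm n q = t}) \<le> (2*real t+1)^n"
proof -
  let ?S = "{q \<in> intvecs n. inorm n q = t}"
  let ?T = "PiE {..<n} (\<lambda>i. {p::int. \<bar>real_of_int p - 0\<bar> \<le> real t})"
  have inj: "inj_on (\<lambda>p. restrict p {..<n}) ?S"
    by (rule inj_on_subset[OF inj_restrict_intvecs]) auto
  have sub: "(\<lambda>p. restrict p {..<n}) ` ?S \<subseteq> ?T"
  proof -
    have qb: "\<bar>q i\<bar> \<le> int (inorm n q)" if "i < n" for q i
    proof -
      have "nat \<bar>q i\<bar> \<in> {0} \<union> {nat \<bar>q i\<bar> | i. i < n}" using that by auto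
      then have "nat \<bar>q i\<bar> \<le> inorm n q" unfolding inorm_def by (intro Max_ge) auto
      then show ?thesis by linarith
    qed
    then have bnd: "\<bar>real_of_int (q i) - 0\<bar> \<le> real (inorm n q)" if "i < n" for q i
    proof -
      have "\<bar>q i\<bar> \<le> int (inorm n q)" using that qb by blast
      then have "real_of_int \<bar>q i\<bar> \<le> real_of_int (int (inorm n q))"
        by (simp only: of_int_le_iff)
      then show ?thesis by simp
    qed
    show ?thesis unfolding image_subset_iff restrict_PiE_iff
    proof (intro ballI)
      fix q i assume "q \<in> ?S" "i \<in> {..<n}"
      then show "q i \<in> {p::int. \<bar>real_of_int p - 0\<bar> \<le> real t}" using bnd[of i q] by simp
    qed
  qed
  have fT: "finite ?T"
    by (intro finite_PiE finite_int_near) auto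
  have "card ?S = card ((\<lambda>p. restrict p {..<n}) ` ?S)" using inj by (simp add: card_image)
  also have "\<dots> \<le> card ?T" by (rule card_mono[OF fT sub])
  finally have "real (card ?S) \<le> real (card ?T)" by simp
  also have "real (card ?T) = (\<Prod>i<n. real (card {p::int. \<bar>real_of_int p - 0\<bar> \<le> real t}))"
    by (simp add: card_PiE)
  also have "\<dots> \<le> (\<Prod>i<n. 2*real t+1)"
    by (intro prod_mono conjI card_int_near) auto
  finally show ?thesis by simp
qed


lemma one_dim_bound:
  fixes s :: int and c K \<psi> :: real
  assumes s: "s \<noteq> 0" and K: "K \<ge> 0" and psi: "0 \<le> \<psi>" "\<psi> \<le> 1"
  shows "emeasure lborel {u. u \<in> {-K..K} \<and> dz (c + u * of_int s) \<le> \<psi>} \<le> ennreal ((2*K+3)*(2*\<psi>))"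
proof -
  define S where "S = {u. u \<in> {-K..K} \<and> dz (c + u * of_int s) \<le> \<psi>}"
  define P where "P = {p::int. \<bar>real_of_int p - c\<bar> \<le> K * \<bar>of_int s\<bar> + 1}"
  define r where "r = \<psi> / \<bar>of_int s\<bar>"
  have sabs: "\<bar>real_of_int s\<bar> \<ge> 1" using s by linarith
  have r0: "r \<ge> 0" using psi by (simp add: r_def)
  have finP: "finite P" unfolding P_def by (rule finite_int_near)
  have cardP: "real (card P) \<le> 2 * (K * \<bar>of_int s\<bar> + 1) + 1"
    unfolding P_def by (rule card_int_near) (use K in simp)
  have sub: "S \<subseteq> (\<Union>p\<in>P. {(of_int p - c)/of_int s - r .. (of_int p - c)/of_int s + r})"
  proof
    fix u assume "u \<in> S"
    then have u: "\<bar>u\<bar> \<le> K" "\<bar>c + u * of_int s - of_int (round (c + u * of_int s))\<bar> \<le> \<psi>"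
      by (auto simp: S_def dz_def)
    define p where "p = round (c + u * of_int s)"
    have "\<bar>u * of_int s\<bar> \<le> K * \<bar>of_int s\<bar>" using u(1) by (simp add: abs_mult mult_right_mono)
    then have "p \<in> P" using u(2) psi unfolding P_def p_def mem_Collect_eq by (auto simp: abs_le_iff)
    moreover have "\<bar>u - (of_int p - c)/of_int s\<bar> \<le> r"
    proof -
      have "u - (of_int p - c)/of_int s = (c + u * of_int s - of_int p) / of_int s"
        using s by (simp add: field_simps)
      then have "\<bar>u - (of_int p - c)/of_int s\<bar> = \<bar>c + u * of_int s - of_int p\<bar> / \<bar>of_int s\<bar>"
        by simp
      also have "\<dots> \<le> \<psi> / \<bar>of_int s\<bar>" using u(2) s unfolding p_def
        by (intro divide_right_mono) auto
      finally show ?thesis by (simp add: r_def)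
    qed
    ultimately show "u \<in> (\<Union>p\<in>P. {(of_int p - c)/of_int s - r .. (of_int p - c)/of_int s + r})"
      by (intro UN_I[of p]) (auto simp: abs_le_iff)
  qed
  have "emeasure lborel S \<le> emeasure lborel (\<Union>p\<in>P. {(of_int p - c)/of_int s - r .. (of_int p - c)/of_int s + r})"
    by (rule emeasure_mono[OF sub]) auto
  also have "\<dots> \<le> (\<Sum>p\<in>P. emeasure lborel {(of_int p - c)/of_int s - r .. (of_int p - c)/of_int s + r})"
    by (rule emeasure_subadditive_finite[OF finP]) auto
  also have "\<dots> = (\<Sum>p\<in>P. ennreal (2*r))"
    using r0 by (intro sum.cong) (auto simp: emeasure_lborel_Icc)
  also have "\<dots> = ennreal (real (card P) * (2*r))"
    using r0 by (simp add: ennreal_mult ennreal_of_nat_eq_real_of_nat)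
  also have "\<dots> \<le> ennreal ((2*K+3)*(2*\<psi>))"
  proof (rule ennreal_leI)
    have "real (card P) * (2*r) \<le> (2 * (K * \<bar>of_int s\<bar> + 1) + 1) * (2*r)"
      using cardP r0 by (intro mult_right_mono) auto
    also have "\<dots> = (2*K + 3/\<bar>of_int s\<bar>) * (2*\<psi>)"
      using s by (simp add: r_def field_simps)
    also have "\<dots> \<le> (2*K+3)*(2*\<psi>)"
      using sabs psi by (intro mult_right_mono) (auto simp: field_simps)
    finally show "real (card P) * (2*r) \<le> (2*K+3)*(2*\<psi>)" .
  qed
  finally show ?thesis unfolding S_def .
qed


definition xval :: "nat \<Rightarrow> (nat\<Rightarrow>real) \<Rightarrow> (nat\<Rightarrow>int) \<Rightarrow> (nat\<times>nat \<Rightarrow> real) \<Rightarrow> nat \<Rightarrow> real" where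
  "xval n a q U i = a i * of_int (q 0) + (\<Sum>j<n-1. U (i,j) * of_int (q (Suc j)))"

definition Ev where
  "Ev m n a K \<psi> q = {U \<in> space (PiM ({..<m}\<times>{..<n-1}) (\<lambda>_. lborel)).
     (\<forall>k\<in>{..<m}\<times>{..<n-1}. \<bar>U k\<bar> \<le> K) \<and> (\<forall>i<m. dz (xval n a q U i) \<le> \<psi>)}"

lemma xval_meas:
  assumes "i < m"
  shows "(\<lambda>U. xval n a q U i) \<in> borel_measurable (PiM ({..<m}\<times>{..<n-1}) (\<lambda>_. lborel))"
  unfolding xval_def
proof (intro borel_measurable_add borel_measurable_const borel_measurable_sum borel_measurable_times)
  fix j assume "j \<in> {..<n-1}"
  then show "(\<lambda>U. U (i, j)) \<in> borel_measurable (PiM ({..<m}\<times>{..<n-1}) (\<lambda>_. lborel))"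
    using assms by (intro measurable_component_singleton[where M="\<lambda>_. lborel", simplified]) auto
qed

lemma Ev_sets: "Ev m n a K \<psi> q \<in> sets (PiM ({..<m}\<times>{..<n-1}) (\<lambda>_. lborel))"
proof -
  let ?M = "PiM ({..<m}\<times>{..<n-1}) (\<lambda>_. lborel)"
  have [measurable]: "k \<in> {..<m}\<times>{..<n-1} \<Longrightarrow> (\<lambda>U. U k) \<in> borel_measurable ?M" for k
    by (intro measurable_component_singleton[where M="\<lambda>_. lborel", simplified]) auto
  have [measurable]: "i < m \<Longrightarrow> (\<lambda>U. xval n a q U i) \<in> borel_measurable ?M" for i
    by (rule xval_meas)
  have "{U \<in> space ?M. \<forall>k\<in>{..<m}\<times>{..<n-1}. \<bar>U k\<bar> \<le> K} \<in> sets ?M"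
    by (intro sets.sets_Collect_finite_All) measurable
  moreover have "{U \<in> space ?M. \<forall>i<m. dz (xval n a q U i) \<le> \<psi>} \<in> sets ?M"
  proof -
    have "{U \<in> space ?M. \<forall>i<m. dz (xval n a q U i) \<le> \<psi>} = {U \<in> space ?M. \<forall>i\<in>{..<m}. dz (xval n a q U i) \<le> \<psi>}"
      by auto
    also have "\<dots> \<in> sets ?M"
      by (intro sets.sets_Collect_finite_All) measurable
    finally show ?thesis .
  qed
  ultimately have "{U \<in> space ?M. \<forall>k\<in>{..<m}\<times>{..<n-1}. \<bar>U k\<bar> \<le> K} \<inter> {U \<in> space ?M. \<forall>i<m. dz (xval n a q U i) \<le> \<psi>} \<in> sets ?M"
    by (rule sets.Int)
  also have "{U \<in> space ?M. \<forall>k\<in>{..<m}\<times>{..<n-1}. \<bar>U k\<bar> \<le> K} \<inter> {U \<in> space ?M. \<forall>i<m. dz (xval n a q U i) \<le> \<psi>} = Ev m n a K \<psi> q"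
    unfolding Ev_def by auto
  finally show ?thesis .
qed

lemma psf: "product_sigma_finite (\<lambda>_::'i. lborel :: real measure)"
  by (simp add: product_sigma_finite_def sigma_finite_lborel)

lemma Ev_bound:
  fixes q :: "nat \<Rightarrow> int" and K \<psi> :: real
  assumes j0: "j0 < n - 1" and s: "q (Suc j0) \<noteq> 0" and K: "K \<ge> 0" and psi: "0 \<le> \<psi>" "\<psi> \<le> 1"
  shows "emeasure (PiM ({..<m}\<times>{..<n-1}) (\<lambda>_. lborel)) (Ev m n a K \<psi> q)
          \<le> ennreal ((2*K)^(m*(n-1) - m) * ((2*K+3)*(2*\<psi>))^m)"
proof -
  define I where "I = {..<m}\<times>{..<n-1}"
  define J0 where "J0 = {..<m}\<times>{j0}"
  define J where "J = I - J0"
  define s' where "s' = q (Suc j0)"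
  define B where "B = (2*K+3)*(2*\<psi>)"
  have B0: "B \<ge> 0" using K psi by (simp add: B_def)
  define cx where "cx x i = a i * of_int (q 0) + (\<Sum>j\<in>{..<n-1} - {j0}. x (i,j) * of_int (q (Suc j)))" for x :: "nat\<times>nat \<Rightarrow> real" and i
  define S where "S x i = {u. u \<in> {-K..K} \<and> dz (cx x i + u * of_int s') \<le> \<psi>}" for x i
  define G where "G x k u = (indicator (S x (fst k)) u :: ennreal)" for x :: "nat\<times>nat\<Rightarrow>real" and k :: "nat\<times>nat" and u :: real
  define BJ where "BJ = PiE J (\<lambda>_. {-K..K::real})"
  have J0I: "J0 \<subseteq> I" using j0 by (auto simp: J0_def I_def)
  have IJ: "J \<union> J0 = I" using J0I by (auto simp: J_def)
  have disj: "J \<inter> J0 = {}" by (auto simp: J_def)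
  have finI: "finite I" by (simp add: I_def)
  have finJ: "finite J" "finite J0" using finI J0I by (auto simp: J_def intro: finite_subset)
  have cardJ0: "card J0 = m" by (simp add: J0_def card_cartesian_product)
  have cardJ: "card J = m*(n-1) - m"
    unfolding J_def using J0I finI by (simp add: card_Diff_subset finite_subset cardJ0 I_def card_cartesian_product)
  have S_meas: "S x i \<in> sets lborel" for x i
    unfolding S_def by measurable
  have Sbound: "emeasure lborel (S x i) \<le> ennreal B" for x i
    unfolding S_def B_def s'_def by (rule one_dim_bound[OF s K psi])
  note fold = product_sigma_finite.product_nn_integral_fold[OF psf disj finJ, unfolded IJ]
  have "emeasure (PiM I (\<lambda>_. lborel)) (Ev m n a K \<psi> q) = \<integral>\<^sup>+U. indicator (Ev m n a K \<psi> q) U \<partial>PiM I (\<lambda>_. lborel)"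
    using Ev_sets unfolding I_def by simp
  also have "\<dots> = \<integral>\<^sup>+x. (\<integral>\<^sup>+y. indicator (Ev m n a K \<psi> q) (merge J J0 (x::nat\<times>nat\<Rightarrow>real, y::nat\<times>nat\<Rightarrow>real)) \<partial>PiM J0 (\<lambda>_. lborel)) \<partial>PiM J (\<lambda>_. lborel)"
    by (rule fold) (use Ev_sets in \<open>simp add: I_def\<close>)
  also have "\<dots> \<le> \<integral>\<^sup>+x. ennreal (B^m) * indicator BJ x \<partial>PiM J (\<lambda>_. lborel)"
  proof (rule nn_integral_mono)
    fix x :: "nat\<times>nat\<Rightarrow>real" assume x: "x \<in> space (PiM J (\<lambda>_. lborel))"
    have "(\<integral>\<^sup>+y. indicator (Ev m n a K \<psi> q) (merge J J0 (x::nat\<times>nat\<Rightarrow>real, y::nat\<times>nat\<Rightarrow>real)) \<partial>PiM J0 (\<lambda>_. lborel))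
        \<le> (\<integral>\<^sup>+y. indicator BJ x * (\<Prod>k\<in>J0. G x k (y k)) \<partial>PiM J0 (\<lambda>_. lborel))"
    proof (rule nn_integral_mono)
      fix y :: "nat\<times>nat\<Rightarrow>real" assume y: "y \<in> space (PiM J0 (\<lambda>_. lborel))"
      show "indicator (Ev m n a K \<psi> q) (merge J J0 (x::nat\<times>nat\<Rightarrow>real, y::nat\<times>nat\<Rightarrow>real)) \<le> indicator BJ x * (\<Prod>k\<in>J0. G x k (y k))"
      proof (cases "merge J J0 (x::nat\<times>nat\<Rightarrow>real, y::nat\<times>nat\<Rightarrow>real) \<in> Ev m n a K \<psi> q")
        case False then show ?thesis by simp
      next
        case True
        let ?U = "merge J J0 (x::nat\<times>nat\<Rightarrow>real, y::nat\<times>nat\<Rightarrow>real)"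
        have U1: "\<bar>?U k\<bar> \<le> K" if "k \<in> I" for k using True that unfolding Ev_def I_def by auto
        have U2: "dz (xval n a q ?U i) \<le> \<psi>" if "i < m" for i using True that unfolding Ev_def by auto
        have "x \<in> BJ"
        proof -
          have "x \<in> PiE J (\<lambda>_. UNIV)" using x by (simp add: space_PiM)
          moreover have "x k \<in> {-K..K}" if "k \<in> J" for k
            using U1[of k] that disj by (auto simp: J_def abs_le_iff)
          ultimately show ?thesis unfolding BJ_def by (auto simp: PiE_def Pi_def)
        qed
        moreover have "G x k (y k) = 1" if "k \<in> J0" for k
        proof -
          obtain i where k: "k = (i, j0)" "i < m" using \<open>k \<in> J0\<close> by (auto simp: J0_def)
          have yk: "?U k = y k" using that disj by simp
          have "xval n a q ?U i = cx x i + y k * of_int s'"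
          proof -
            have "(\<Sum>j<n-1. ?U (i,j) * of_int (q (Suc j)))
                = ?U (i,j0) * of_int (q (Suc j0)) + (\<Sum>j\<in>{..<n-1} - {j0}. ?U (i,j) * of_int (q (Suc j)))"
              using j0 by (subst sum.remove[of _ j0]) auto
            also have "(\<Sum>j\<in>{..<n-1} - {j0}. ?U (i,j) * of_int (q (Suc j))) = (\<Sum>j\<in>{..<n-1} - {j0}. x (i,j) * of_int (q (Suc j)))"
            proof (rule sum.cong)
              fix j assume "j \<in> {..<n-1} - {j0}"
              then have "(i,j) \<in> J" using k by (auto simp: J_def J0_def I_def)
              then show "?U (i,j) * of_int (q (Suc j)) = x (i,j) * of_int (q (Suc j))" using disj by simp
            qed simp
            finally show ?thesis using yk k unfolding xval_def cx_def s'_def by simp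
          qed
          moreover have "y k \<in> {-K..K}" using U1[of k] yk that J0I by (auto simp: abs_le_iff)
          ultimately have "y k \<in> S x i" using U2[OF k(2)] by (simp add: S_def)
          then show ?thesis by (simp add: G_def k)
        qed
        ultimately show ?thesis using True by simp
      qed
    qed
    also have "\<dots> = indicator BJ x * (\<integral>\<^sup>+y. (\<Prod>k\<in>J0. G x k (y k)) \<partial>PiM J0 (\<lambda>_. lborel))"
    proof (rule nn_integral_cmult)
      show "(\<lambda>y. \<Prod>k\<in>J0. G x k (y k)) \<in> borel_measurable (PiM J0 (\<lambda>_. lborel))"
    proof (intro borel_measurable_prod_ennreal)
      fix k assume k: "k \<in> J0"
      have "(\<lambda>u. G x k u) \<in> borel_measurable lborel" unfolding G_def using S_meas by simp
      moreover have "(\<lambda>y. y k) \<in> measurable (PiM J0 (\<lambda>_. lborel)) lborel"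
        by (rule measurable_component_singleton[OF k])
      ultimately show "(\<lambda>y. G x k (y k)) \<in> borel_measurable (PiM J0 (\<lambda>_. lborel))"
        by (rule measurable_compose[rotated])
    qed
    qed
    also have "\<dots> = indicator BJ x * (\<Prod>k\<in>J0. \<integral>\<^sup>+u. G x k u \<partial>lborel)"
      using product_sigma_finite.product_nn_integral_prod[OF psf finJ(2), of "G x"]
      unfolding G_def using S_meas by simp
    also have "\<dots> \<le> indicator BJ x * (\<Prod>k\<in>J0. ennreal B)"
    proof (intro mult_left_mono prod_mono_ennreal)
      fix k assume "k \<in> J0"
      show "(\<integral>\<^sup>+u. G x k u \<partial>lborel) \<le> ennreal B"
        unfolding G_def using S_meas Sbound by simp
    qed simp
    also have "\<dots> = ennreal (B^m) * indicator BJ x"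
      using B0 cardJ0 by (simp add: ennreal_power mult.commute)
    finally show "(\<integral>\<^sup>+y. indicator (Ev m n a K \<psi> q) (merge J J0 (x::nat\<times>nat\<Rightarrow>real, y::nat\<times>nat\<Rightarrow>real)) \<partial>PiM J0 (\<lambda>_. lborel))
        \<le> ennreal (B^m) * indicator BJ x" .
  qed
  also have "\<dots> = ennreal (B^m) * emeasure (PiM J (\<lambda>_. lborel)) BJ"
    by (rule nn_integral_cmult_indicator) (unfold BJ_def, rule sets_PiM_I_finite[OF finJ(1)], simp)
  also have "emeasure (PiM J (\<lambda>_. lborel)) BJ = (\<Prod>k\<in>J. emeasure lborel {-K..K})"
    unfolding BJ_def by (rule product_sigma_finite.emeasure_PiM[OF psf finJ(1)]) simp
  also have "\<dots> = ennreal ((2*K)^(m*(n-1) - m))"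
    using K cardJ by (simp add: ennreal_power)
  finally show ?thesis
    using B0 K by (simp add: I_def B_def ennreal_mult' mult.commute)
qed


lemma summable_bound:
  fixes \<Phi> :: "nat \<Rightarrow> real" and \<theta> C :: real
  assumes m: "m \<ge> 1" and pos: "\<And>t. \<Phi> t > 0" and C: "C \<ge> 0"
    and lim: "Liminf sequentially (\<lambda>t. ereal (- ln (\<Phi> t) / ln (real t))) > ereal \<theta>"
    and th: "\<theta> \<ge> (real n + 1) / real m"
  shows "summable (\<lambda>t. (2*real t+1)^n * C * \<Phi> t ^ m)"
proof -
  obtain r where r: "ereal \<theta> < ereal r" "ereal r < Liminf sequentially (\<lambda>t. ereal (- ln (\<Phi> t) / ln (real t)))"
    using ereal_dense2[OF lim] by blast
  have rth: "r > \<theta>" using r(1) by simp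
  have rm: "r * real m > real n + 1"
  proof -
    have "(real n + 1) / real m < r" using rth th by linarith
    then show ?thesis using m by (simp add: field_simps)
  qed
  have ev: "eventually (\<lambda>t. ereal (- ln (\<Phi> t) / ln (real t)) > ereal r) sequentially"
    by (rule less_LiminfD[OF r(2)])
  have "eventually (\<lambda>t. norm ((2*real t+1)^n * C * \<Phi> t ^ m) \<le> C * 3^n * real t powr (real n - r * real m)) sequentially"
    using ev eventually_ge_at_top[of 2]
  proof eventually_elim
    case (elim t)
    have t2: "real t \<ge> 2" using elim(2) by simp
    have lnt: "ln (real t) > 0" using t2 by simp
    have "r < - ln (\<Phi> t) / ln (real t)" using elim(1) by simp
    then have "r * ln (real t) < - ln (\<Phi> t)" using lnt by (simp add: field_simps)
    then have "ln (\<Phi> t) < ln (real t powr (-r))" using t2 by (simp add: ln_powr)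
    then have phi: "\<Phi> t < real t powr (-r)" using ln_less_cancel_iff[of "\<Phi> t" "real t powr (-r)"] pos[of t] t2 by simp
    have "\<Phi> t ^ m \<le> (real t powr (-r)) ^ m"
      using phi pos[of t] by (intro power_mono) auto
    also have "\<dots> = real t powr (- r * real m)"
      using t2 by (simp add: powr_realpow[symmetric] powr_powr)
    finally have p1: "\<Phi> t ^ m \<le> real t powr (- r * real m)" .
    have "(2*real t+1)^n \<le> (3 * real t)^n" using t2 by (intro power_mono) auto
    also have "\<dots> = 3^n * real t powr real n" using t2 by (simp add: power_mult_distrib powr_realpow)
    finally have p2: "(2*real t+1)^n \<le> 3^n * real t powr real n" .
    have "norm ((2*real t+1)^n * C * \<Phi> t ^ m) = (2*real t+1)^n * C * \<Phi> t ^ m"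
      using pos[of t] C by simp
    also have "\<dots> \<le> (3^n * real t powr real n) * C * real t powr (- r * real m)"
      using p1 p2 C pos[of t] by (intro mult_mono) auto
    also have "\<dots> = C * 3^n * (real t powr real n * real t powr (- r * real m))" by simp
    also have "real t powr real n * real t powr (- r * real m) = real t powr (real n - r * real m)"
      by (simp add: powr_add[symmetric])
    finally show ?case .
  qed
  moreover have "summable (\<lambda>t. C * 3^n * real t powr (real n - r * real m))"
    by (intro summable_mult) (simp add: summable_real_powr_iff, use rm in linarith)
  ultimately show ?thesis by (rule summable_comparison_test_ev)
qed


lemma inorm_ge: "i < n \<Longrightarrow> \<bar>q i\<bar> \<le> int (inorm n q)"
proof -
  assume i: "i < n"
  have "nat \<bar>q i\<bar> \<in> {0} \<union> {nat \<bar>q i\<bar> | i. i < n}" using i by auto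
  then have "nat \<bar>q i\<bar> \<le> inorm n q" unfolding inorm_def by (intro Max_ge) auto
  then show ?thesis by linarith
qed

lemma inorm_pos: assumes "q \<in> intvecs n" "q \<noteq> (\<lambda>_. 0)" shows "inorm n q \<ge> 1"
proof -
  obtain i where i: "q i \<noteq> 0" using assms(2) by auto
  then have "i < n" using assms(1) unfolding intvecs_def by (rule_tac ccontr) auto
  then have "\<bar>q i\<bar> \<le> int (inorm n q)" by (rule inorm_ge)
  then show ?thesis using i by linarith
qed

lemma resnorm_ge: "i < m \<Longrightarrow> \<bar>(\<Sum>j<n. A i j * of_int (q j)) - of_int (p i)\<bar> \<le> resnorm m n A p q"
  unfolding resnorm_def by (intro Max_ge) auto

lemma sum_AU: assumes "n \<ge> 1"
  shows "(\<Sum>j<n. (if j = 0 then a i else U (i, j-1)) * of_int (q j)) = xval n a q U i"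
proof -
  obtain n' where n: "n = Suc n'" using assms by (cases n) auto
  show ?thesis unfolding n xval_def by (simp del: sum.lessThan_Suc add: sum.lessThan_Suc_shift)
qed

lemma xval_1: assumes "q \<in> intvecs 1" shows "xval n a q U i = a i * of_int (q 0)"
  using assms unfolding xval_def intvecs_def by simp

lemma res_AU_1: assumes "n \<ge> 1" "q \<in> intvecs 1"
  shows "resnorm m n (\<lambda>i j. if j = 0 then a i else U (i, j-1)) p q = resnorm m 1 (\<lambda>i j. a i) p q"
  unfolding resnorm_def sum_AU[OF assms(1)] xval_1[OF assms(2)] by simp

lemma inorm_1: assumes "n \<ge> 1" "q \<in> intvecs 1" shows "inorm n q = inorm 1 q"
proof -
  have "{0} \<union> {nat \<bar>q i\<bar> | i. i < n} = {0} \<union> {nat \<bar>q i\<bar> | i. i < 1}"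
  proof (intro equalityI subsetI)
    fix x assume "x \<in> {0} \<union> {nat \<bar>q i\<bar> | i. i < n}"
    then obtain i where "x = 0 \<or> (x = nat \<bar>q i\<bar> \<and> i < n)" by auto
    moreover have "i \<ge> 1 \<Longrightarrow> q i = 0" using assms(2) unfolding intvecs_def by auto
    ultimately show "x \<in> {0} \<union> {nat \<bar>q i\<bar> | i. i < 1}"
      by (cases "i = 0") auto
  next
    fix x assume "x \<in> {0} \<union> {nat \<bar>q i\<bar> | i. i < 1}"
    then show "x \<in> {0} \<union> {nat \<bar>q i\<bar> | i. i < n}" using assms(1) by auto
  qed
  then show ?thesis unfolding inorm_def by simp
qed


theorem lemma5p2:
  fixes m n :: nat and \<Phi> :: "nat \<Rightarrow> real" and a :: "nat \<Rightarrow> real"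
  assumes "m \<ge> 1" and "n \<ge> 1"
    and "\<And>t. \<Phi> t > 0"
    and "\<And>t. t \<ge> 1 \<Longrightarrow> \<Phi> t \<le> real t powr (- (real n / real m))"
    and "Liminf sequentially (\<lambda>t. ereal (- ln (\<Phi> t) / ln (real t)))
           > ereal (real (max (n + 1) (m + 2)) / real m)"
    and "(\<lambda>i j. a i) \<in> Exact m 1 \<Phi>"
  shows "AE U in PiM ({..<m} \<times> {..<n - 1}) (\<lambda>_. lborel).
           (\<lambda>i j. if j = 0 then a i else U (i, j - 1)) \<in> Exact m n \<Phi>"
proof -
  note m = assms(1) and n = assms(2) and pos = assms(3) and upper = assms(4) and lim = assms(5)
  define I where "I = {..<m} \<times> {..<n - 1}"
  define M where "M = PiM I (\<lambda>_. lborel :: real measure)"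
  define AU where "AU U = (\<lambda>i j. if j = 0 then a i else U (i, j - 1))" for U :: "nat\<times>nat \<Rightarrow> real"
  define S where "S \<Psi> A = {(p,q). p \<in> intvecs m \<and> q \<in> intvecs n \<and> q \<noteq> (\<lambda>_. 0) \<and> resnorm m n A p q \<le> \<Psi> (inorm n q)}"
    for \<Psi> :: "nat \<Rightarrow> real" and A
  define S1 where "S1 \<Psi> = {(p,q). p \<in> intvecs m \<and> q \<in> intvecs 1 \<and> q \<noteq> (\<lambda>_. 0) \<and> resnorm m 1 (\<lambda>i j. a i) p q \<le> \<Psi> (inorm 1 q)}"
    for \<Psi> :: "nat \<Rightarrow> real"
  define Bad where "Bad U = {(p,q). (p,q) \<in> S \<Phi> (AU U) \<and> (\<exists>j. Suc j < n \<and> q (Suc j) \<noteq> 0)}" for U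
  have aW: "infinite (S1 \<Phi>)" using assms(6) by (simp add: Exact_def W_def S1_def)
  have aNW: "finite (S1 (\<lambda>t. \<Phi> t / c))" if "c > 1" for c
    using assms(6) that by (auto simp: Exact_def W_def S1_def)
  have q1n: "q \<in> intvecs n" if "q \<in> intvecs 1" for q using that n by (auto simp: intvecs_def)
  have good_imp: "AU U \<in> Exact m n \<Phi>" if fin: "finite (Bad U)" for U
  proof -
    have "S1 \<Phi> \<subseteq> S \<Phi> (AU U)"
    proof
      fix x assume "x \<in> S1 \<Phi>"
      then obtain p q where x: "x = (p,q)" "p \<in> intvecs m" "q \<in> intvecs 1" "q \<noteq> (\<lambda>_. 0)"
        "resnorm m 1 (\<lambda>i j. a i) p q \<le> \<Phi> (inorm 1 q)" by (auto simp: S1_def)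
      then show "x \<in> S \<Phi> (AU U)" using res_AU_1[OF n x(3)] inorm_1[OF n x(3)] q1n[OF x(3)]
        by (simp add: S_def AU_def)
    qed
    then have W1: "infinite (S \<Phi> (AU U))" using aW infinite_super by blast
    have W2: "finite (S (\<lambda>t. \<Phi> t / c) (AU U))" if c: "c > 1" for c
    proof -
      have "S (\<lambda>t. \<Phi> t / c) (AU U) \<subseteq> Bad U \<union> S1 (\<lambda>t. \<Phi> t / c)"
      proof
        fix x assume "x \<in> S (\<lambda>t. \<Phi> t / c) (AU U)"
        then obtain p q where x: "x = (p,q)" "p \<in> intvecs m" "q \<in> intvecs n" "q \<noteq> (\<lambda>_. 0)"
          "resnorm m n (AU U) p q \<le> \<Phi> (inorm n q) / c" by (auto simp: S_def)
        show "x \<in> Bad U \<union> S1 (\<lambda>t. \<Phi> t / c)"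
        proof (cases "\<exists>j. Suc j < n \<and> q (Suc j) \<noteq> 0")
          case True
          have "\<Phi> (inorm n q) / c \<le> \<Phi> (inorm n q)"
            using pos[of "inorm n q"] c by (simp add: divide_le_eq)
          then show ?thesis using True x by (auto simp: Bad_def S_def)
        next
          case False
          have q1: "q \<in> intvecs 1"
            unfolding intvecs_def
          proof (intro CollectI allI impI)
            fix i :: nat assume "i \<ge> 1"
            then obtain j where j: "i = Suc j" by (cases i) auto
            show "q i = 0"
            proof (cases "i < n")
              case True then show ?thesis using False j by auto
            next
              case False then show ?thesis using x(3) by (auto simp: intvecs_def)
            qed
          qed
          then show ?thesis using x res_AU_1[OF n q1] inorm_1[OF n q1]
            by (simp add: S1_def AU_def)
        qed
      qed
      moreover have "finite (Bad U \<union> S1 (\<lambda>t. \<Phi> t / c))" using fin aNW[OF c] by simp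
      ultimately show ?thesis by (rule finite_subset)
    qed
    show ?thesis
      using W1 W2 unfolding Exact_def W_def S_def by auto
  qed
  have box: "AE U in M. (\<forall>k\<in>I. \<bar>U k\<bar> \<le> real K) \<longrightarrow> finite (Bad U)" for K :: nat
  proof -
    define Q where "Q t = {q \<in> intvecs n. inorm n q = t \<and> (\<exists>j. Suc j < n \<and> q (Suc j) \<noteq> 0)}" for t
    define F where "F t = (\<Union>q\<in>Q t. Ev m n a (real K) (\<Phi> t) q)" for t
    define C where "C = (2*real K)^(m*(n-1) - m) * ((2*real K+3)*2)^m"
    have C0: "C \<ge> 0" by (simp add: C_def)
    have Qsub: "Q t \<subseteq> {q \<in> intvecs n. \<forall>i<n. \<bar>real_of_int (q i) - (\<lambda>_. 0) i\<bar> \<le> real t}" for t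
    proof
      fix q assume "q \<in> Q t"
      then have "q \<in> intvecs n" "inorm n q = t" by (auto simp: Q_def)
      moreover have "\<bar>real_of_int (q i)\<bar> \<le> real (inorm n q)" if "i < n" for i
        using inorm_ge[OF that, of q] by linarith
      ultimately show "q \<in> {q \<in> intvecs n. \<forall>i<n. \<bar>real_of_int (q i) - (\<lambda>_. 0) i\<bar> \<le> real t}" by auto
    qed
    have finQ: "finite (Q t)" for t
      by (rule finite_subset[OF Qsub finite_intvecs_bounded])
    have cardQ: "real (card (Q t)) \<le> (2*real t+1)^n" for t
    proof -
      have "Q t \<subseteq> {q \<in> intvecs n. inorm n q = t}" by (auto simp: Q_def)
      moreover have "finite {q \<in> intvecs n. inorm n q = t}"
      proof (rule finite_subset[OF _ finite_intvecs_bounded[of n "\<lambda>_. 0" "real t"]])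
        show "{q \<in> intvecs n. inorm n q = t} \<subseteq> {q \<in> intvecs n. \<forall>i<n. \<bar>real_of_int (q i) - (\<lambda>_. 0) i\<bar> \<le> real t}"
        proof
          fix q assume q: "q \<in> {q \<in> intvecs n. inorm n q = t}"
          have "\<bar>real_of_int (q i)\<bar> \<le> real (inorm n q)" if "i < n" for i
            using inorm_ge[OF that, of q] by linarith
          then show "q \<in> {q \<in> intvecs n. \<forall>i<n. \<bar>real_of_int (q i) - (\<lambda>_. 0) i\<bar> \<le> real t}" using q by auto
        qed
      qed
      ultimately have "card (Q t) \<le> card {q \<in> intvecs n. inorm n q = t}" by (rule card_mono[rotated])
      then show ?thesis using card_intvecs_norm[of n t] by linarith
    qed
    have Q0: "Q 0 = {}"
    proof -
      have False if "q \<in> Q 0" for q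
      proof -
        from that obtain j where "inorm n q = 0" "Suc j < n" "q (Suc j) \<noteq> 0" by (auto simp: Q_def)
        then show False using inorm_ge[of "Suc j" n q] by linarith
      qed
      then show ?thesis by blast
    qed
    have Fsets: "F t \<in> sets M" for t
      unfolding F_def M_def I_def using finQ[of t] Ev_sets by (intro sets.finite_UN) auto
    have Fbound: "emeasure M (F t) \<le> ennreal ((2*real t+1)^n * C * \<Phi> t ^ m)" for t
    proof (cases "t = 0")
      case True then show ?thesis by (simp add: F_def Q0)
    next
      case False
      then have t1: "t \<ge> 1" by simp
      have phi1: "\<Phi> t \<le> 1"
      proof -
        have "real t powr (real n / real m) \<ge> 1" using t1 by (intro ge_one_powr_ge_zero) auto
        then have "real t powr (- (real n / real m)) \<le> 1"
          using t1 by (simp add: powr_minus inverse_le_1_iff)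
        then show ?thesis using upper[OF t1] by linarith
      qed
      have "emeasure M (F t) \<le> (\<Sum>q\<in>Q t. emeasure M (Ev m n a (real K) (\<Phi> t) q))"
        unfolding F_def using finQ[of t] Ev_sets unfolding M_def I_def
        by (intro emeasure_subadditive_finite) auto
      also have "\<dots> \<le> (\<Sum>q\<in>Q t. ennreal (C * \<Phi> t ^ m))"
      proof (rule sum_mono)
        fix q assume "q \<in> Q t"
        then obtain j where j: "Suc j < n" "q (Suc j) \<noteq> 0" by (auto simp: Q_def)
        have "emeasure M (Ev m n a (real K) (\<Phi> t) q)
            \<le> ennreal ((2*real K)^(m*(n-1) - m) * ((2*real K+3)*(2*\<Phi> t))^m)"
          unfolding M_def I_def
          by (rule Ev_bound) (use j pos[of t] phi1 in auto)
        also have "(2*real K)^(m*(n-1) - m) * ((2*real K+3)*(2*\<Phi> t))^m = C * \<Phi> t ^ m"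
        proof -
          have "((2*real K+3)*(2*\<Phi> t))^m = ((2*real K+3)*2)^m * \<Phi> t ^ m"
            by (metis mult.assoc power_mult_distrib)
          then show ?thesis unfolding C_def by (simp only: mult.assoc)
        qed
        finally show "emeasure M (Ev m n a (real K) (\<Phi> t) q) \<le> ennreal (C * \<Phi> t ^ m)" .
      qed
      also have "\<dots> = ennreal (real (card (Q t)) * (C * \<Phi> t ^ m))"
        using C0 pos[of t] by (simp add: ennreal_mult ennreal_of_nat_eq_real_of_nat)
      also have "\<dots> \<le> ennreal ((2*real t+1)^n * C * \<Phi> t ^ m)"
      proof (rule ennreal_leI)
        have "real (card (Q t)) * (C * \<Phi> t ^ m) \<le> (2*real t+1)^n * (C * \<Phi> t ^ m)"
          using cardQ[of t] C0 pos[of t] by (intro mult_right_mono) auto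
        then show "real (card (Q t)) * (C * \<Phi> t ^ m) \<le> (2*real t+1)^n * C * \<Phi> t ^ m" by simp
      qed
      finally show ?thesis .
    qed
    have Ffin: "emeasure M (F t) < \<infinity>" for t
      using Fbound[of t] by (simp add: le_less_trans)
    have Fmeas: "measure M (F t) \<le> (2*real t+1)^n * C * \<Phi> t ^ m" for t
    proof -
      have "emeasure M (F t) = ennreal (measure M (F t))"
        using Ffin[of t] by (simp add: emeasure_eq_ennreal_measure)
      then have "ennreal (measure M (F t)) \<le> ennreal ((2*real t+1)^n * C * \<Phi> t ^ m)"
        using Fbound[of t] by simp
      moreover have "(2*real t+1)^n * C * \<Phi> t ^ m \<ge> 0" using C0 pos[of t] by simp
      ultimately show ?thesis by (simp add: ennreal_le_iff)
    qed
    have summ: "summable (\<lambda>t. (2*real t+1)^n * C * \<Phi> t ^ m)"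
    proof (rule summable_bound[OF m pos C0 lim])
      have "real n + 1 \<le> real (max (n + 1) (m + 2))" by simp
      then show "(real n + 1) / real m \<le> real (max (n + 1) (m + 2)) / real m"
        using m by (intro divide_right_mono) auto
    qed
    have summF: "summable (\<lambda>t. measure M (F t))"
      by (rule summable_comparison_test_ev[OF _ summ]) (use Fmeas in auto)
    have BC: "AE U in M. eventually (\<lambda>t. U \<in> space M - F t) sequentially"
      by (rule borel_cantelli_AE1[OF Fsets Ffin summF])
    show ?thesis
      using BC AE_space
    proof (eventually_elim)
      case (elim U)
      show ?case
      proof
        assume bx: "\<forall>k\<in>I. \<bar>U k\<bar> \<le> real K"
        obtain T where T: "\<And>t. t \<ge> T \<Longrightarrow> U \<notin> F t"
          using elim(1) unfolding eventually_sequentially by auto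
        define QT where "QT = {q \<in> intvecs n. \<forall>i<n. \<bar>real_of_int (q i) - (\<lambda>_. 0) i\<bar> \<le> real T}"
        define PS where "PS q = {p \<in> intvecs m. \<forall>i<m. \<bar>real_of_int (p i) - (\<lambda>i. xval n a q U i) i\<bar> \<le> \<Phi> (inorm n q)}" for q
        have "Bad U \<subseteq> (\<Union>q\<in>QT. PS q \<times> {q})"
        proof
          fix x assume "x \<in> Bad U"
          then obtain p q j where x: "x = (p,q)" "p \<in> intvecs m" "q \<in> intvecs n" "q \<noteq> (\<lambda>_. 0)"
            "resnorm m n (AU U) p q \<le> \<Phi> (inorm n q)" "Suc j < n" "q (Suc j) \<noteq> 0"
            by (auto simp: Bad_def S_def)
          define t where "t = inorm n q"
          have close: "\<bar>real_of_int (p i) - xval n a q U i\<bar> \<le> \<Phi> t" if "i < m" for i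
          proof -
            have "\<bar>(\<Sum>j<n. AU U i j * of_int (q j)) - of_int (p i)\<bar> \<le> resnorm m n (AU U) p q"
              by (rule resnorm_ge[OF that])
            then have "\<bar>xval n a q U i - of_int (p i)\<bar> \<le> \<Phi> t"
              using x(5) sum_AU[OF n, of a i U q] unfolding AU_def t_def by simp
            then show ?thesis by (simp add: abs_minus_commute)
          qed
          have "U \<in> Ev m n a (real K) (\<Phi> t) q"
            unfolding Ev_def
          proof (intro CollectI conjI allI impI ballI)
            show "U \<in> space (PiM ({..<m}\<times>{..<n-1}) (\<lambda>_. lborel))" using elim(2) by (simp add: M_def I_def)
            show "\<bar>U k\<bar> \<le> real K" if "k \<in> {..<m}\<times>{..<n-1}" for k using bx that unfolding I_def by blast
            show "dz (xval n a q U i) \<le> \<Phi> t" if "i < m" for i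
              using dz_le[of "xval n a q U i" "p i"] close[OF that] by (simp add: abs_minus_commute)
          qed
          moreover have "q \<in> Q t" using x by (auto simp: Q_def t_def)
          ultimately have "U \<in> F t" by (auto simp: F_def)
          then have "t < T" using T by (meson not_le)
          have "q \<in> QT"
          proof -
            have "\<bar>real_of_int (q i)\<bar> \<le> real T" if "i < n" for i
              using inorm_ge[OF that, of q] \<open>t < T\<close> unfolding t_def by linarith
            then show ?thesis using x(3) by (simp add: QT_def)
          qed
          moreover have "p \<in> PS q" using x(2) close by (simp add: PS_def t_def)
          ultimately show "x \<in> (\<Union>q\<in>QT. PS q \<times> {q})" using x(1) by auto
        qed
        moreover have "finite (\<Union>q\<in>QT. PS q \<times> {q})"
          unfolding QT_def PS_def by (intro finite_UN_I finite_intvecs_bounded finite_cartesian_product) auto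
        ultimately show "finite (Bad U)" by (rule finite_subset)
      qed
    qed
  qed
  have "AE U in M. \<forall>K::nat. (\<forall>k\<in>I. \<bar>U k\<bar> \<le> real K) \<longrightarrow> finite (Bad U)"
    unfolding AE_all_countable using box by blast
  then have AEgood: "AE U in M. finite (Bad U)"
    using AE_space
  proof eventually_elim
    case (elim U)
    define K where "K = nat \<lceil>\<Sum>k\<in>I. \<bar>U k\<bar>\<rceil>"
    have "\<bar>U k\<bar> \<le> real K" if "k \<in> I" for k
    proof -
      have "\<bar>U k\<bar> \<le> (\<Sum>k\<in>I. \<bar>U k\<bar>)"
        using that by (intro member_le_sum) (auto simp: I_def)
      also have "\<dots> \<le> real K" unfolding K_def by linarith
      finally show ?thesis .
    qed
    then show ?case using elim(1) by blast
  qed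
  show ?thesis
    using AEgood unfolding M_def I_def
    by (rule AE_mp) (auto intro!: AE_I2 good_imp[unfolded AU_def])
qed

end
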